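(* Let $p\ge q\ge1$. Let $Q_1:\mathbb{R}^{d_0}\to\mathbb{R}^{d_1}$ and $Q_2:\mathbb{R}^{d_0}\to\mathbb{R}^{d_2}$ be measurable. Fix a measurable partition $U_1,\dots,U_l$ of $[0,1]^{d_0}$ and a measurable set $B\subset\mathbb{R}^{d_0+d_1}$. For measurable $U\subset\mathbb{R}^{d_0}$ define $E^{(1)}_Ug(x_0,x_1)=\int_U g(u)e(x_0\cdot u+x_1\cdot Q_1(u))\,du$ and $E^{(2)}_Uh(x_0,x_1,x_2)=\int_U h(u)e(x_0\cdot u+x_1\cdot Q_1(u)+x_2\cdot Q_2(u))\,du$, where $x_i\in\mathbb{R}^{d_i}$ and $e(z)=e^{2\pi iz}$. Suppose $C$ is a number such that $\|E^{(1)}_{[0,1]^{d_0}}g\|_{L^p(B)}\le C\big(\sum_i\|E^{(1)}_{U_i}g\|_{L^p(B)}^q\big)^{1/q}$ for all measurable $g$. Then for every measurable $B'\subset\mathbb{R}^{d_2}$ and every measurable $h$, $\|E^{(2)}_{[0,1]^{d_0}}h\|_{L^p(B\times B')}\le C\big(\sum_i\|E^{(2)}_{U_i}h\|_{L^p(B\times B')}^q\big)^{1/q}$. *)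

theory Defs
  imports "HOL-Analysis.Analysis"
begin

definition enn_powr :: "ennreal \<Rightarrow> real \<Rightarrow> ennreal" where
  "enn_powr x a = (if x = \<infinity> then \<infinity> else ennreal (enn2real x powr a))"

definition Lp_on :: "real \<Rightarrow> 'x::euclidean_space set \<Rightarrow> ('x \<Rightarrow> complex) \<Rightarrow> ennreal" where
  "Lp_on p S F = enn_powr (\<integral>\<^sup>+ x \<in> S. ennreal (norm (F x) powr p) \<partial>lebesgue) (1 / p)"

definition e :: "real \<Rightarrow> complex" where
  "e z = exp (2 * complex_of_real pi * \<i> * complex_of_real z)"

definition E1 :: "('a::euclidean_space \<Rightarrow> 'b::euclidean_space) \<Rightarrow> 'a set \<Rightarrow> ('a \<Rightarrow> complex)
    \<Rightarrow> 'a \<times> 'b \<Rightarrow> complex" where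
  "E1 Q1 U g = (\<lambda>(x0, x1). LINT u:U|lebesgue. g u * e (x0 \<bullet> u + x1 \<bullet> Q1 u))"

definition E2 :: "('a::euclidean_space \<Rightarrow> 'b::euclidean_space) \<Rightarrow> ('a \<Rightarrow> 'c::euclidean_space)
    \<Rightarrow> 'a set \<Rightarrow> ('a \<Rightarrow> complex) \<Rightarrow> ('a \<times> 'b) \<times> 'c \<Rightarrow> complex" where
  "E2 Q1 Q2 U h = (\<lambda>((x0, x1), x2). LINT u:U|lebesgue. h u * e (x0 \<bullet> u + x1 \<bullet> Q1 u + x2 \<bullet> Q2 u))"

end

theory Submission
  imports Defs
begin


lemma powr_convex0:
  assumes r: "(r::real) \<ge> 1" shows "convex_on {0..} (\<lambda>x::real. x powr r)"
proof (rule convex_onI)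
  fix t x y :: real assume t: "0 < t" "t < 1" and x: "x \<in> {0..}" and y: "y \<in> {0..}"
  show "((1 - t) *\<^sub>R x + t *\<^sub>R y) powr r \<le> (1 - t) * x powr r + t * y powr r"
  proof (cases "x = 0 \<or> y = 0")
    case False
    then have "x \<in> {0<..}" "y \<in> {0<..}" using x y by auto
    then show ?thesis using convex_onD[OF powr_convex[OF r], of t x y] t by auto
  next
    case True
    have pw: "s powr r \<le> s" if "0 \<le> s" "s \<le> 1" for s :: real
    proof (cases "s = 0")
      case False
      then have "s powr r \<le> s powr 1" using that r by (intro powr_mono') auto
      then show ?thesis using that by simp
    qed simp
    show ?thesis
    proof (cases "x = 0")
      case True
      have "((1 - t) *\<^sub>R x + t *\<^sub>R y) powr r = t powr r * y powr r"
        using True t y by (simp add: powr_mult)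
      also have "\<dots> \<le> t * y powr r" using pw[of t] t by (intro mult_right_mono) auto
      finally show ?thesis using True by simp
    next
      case False
      then have y0: "y = 0" using True by auto
      have "((1 - t) *\<^sub>R x + t *\<^sub>R y) powr r = (1-t) powr r * x powr r"
        using y0 t x by (simp add: powr_mult)
      also have "\<dots> \<le> (1-t) * x powr r" using pw[of "1-t"] t by (intro mult_right_mono) auto
      finally show ?thesis using y0 by simp
    qed
  qed
qed auto

lemma jensen_pow:
  fixes c x :: "'i \<Rightarrow> real"
  assumes P: "finite P" and c: "\<And>i. i \<in> P \<Longrightarrow> c i > 0" and x: "\<And>i. i \<in> P \<Longrightarrow> x i \<ge> 0"
    and r: "r \<ge> 1"
  shows "(\<Sum>i\<in>P. x i) powr r \<le> (\<Sum>i\<in>P. c i) powr (r - 1) * (\<Sum>i\<in>P. c i powr (1 - r) * x i powr r)"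
proof (cases "P = {}")
  case True then show ?thesis by simp
next
  case False
  define S where "S = (\<Sum>i\<in>P. c i)"
  have S: "S > 0" unfolding S_def using False P c by (intro sum_pos) auto
  have "(\<Sum>i\<in>P. (c i / S) *\<^sub>R (x i / c i)) powr r \<le> (\<Sum>i\<in>P. (c i / S) * (x i / c i) powr r)"
    using P False S c x
    by (intro convex_on_sum[OF _ _ powr_convex0[OF r]]) (auto simp: S_def sum_divide_distrib[symmetric] less_imp_le)
  also have "(\<Sum>i\<in>P. (c i / S) *\<^sub>R (x i / c i)) = (\<Sum>i\<in>P. x i) / S"
    using c S by (simp add: sum_divide_distrib) (intro sum.cong, auto, metis less_irrefl)
  also have "(\<Sum>i\<in>P. (c i / S) * (x i / c i) powr r) = (\<Sum>i\<in>P. c i powr (1 - r) * x i powr r) / S"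
    unfolding sum_divide_distrib
  proof (intro sum.cong refl)
    fix i assume i: "i \<in> P"
    have "c i powr (1 - r) = c i powr (1 + - r)" by simp
    also have "\<dots> = c i powr 1 * c i powr (- r)" by (rule powr_add)
    finally have "c i powr (1 - r) = c i powr 1 * c i powr (- r)" .
    then have "c i * c i powr - r = c i powr (1 - r)" using c[OF i] by simp
    then show "c i / S * (x i / c i) powr r = c i powr (1 - r) * x i powr r / S"
      using c[OF i] x[OF i] by (simp add: powr_divide powr_minus divide_simps)
  qed
  finally have *: "((\<Sum>i\<in>P. x i) / S) powr r \<le> (\<Sum>i\<in>P. c i powr (1 - r) * x i powr r) / S" .
  have sx: "(\<Sum>i\<in>P. x i) \<ge> 0" using x by (simp add: sum_nonneg)
  have "(\<Sum>i\<in>P. x i) powr r = S powr r * ((\<Sum>i\<in>P. x i) / S) powr r"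
    using S sx by (simp add: powr_divide)
  also have "\<dots> \<le> S powr r * ((\<Sum>i\<in>P. c i powr (1 - r) * x i powr r) / S)"
    using * by (intro mult_left_mono) auto
  also have "\<dots> = S powr (r - 1) * (\<Sum>i\<in>P. c i powr (1 - r) * x i powr r)"
    using S by (simp add: powr_diff)
  finally show ?thesis unfolding S_def .
qed



lemma enn_powr_ennreal: "0 \<le> x \<Longrightarrow> enn_powr (ennreal x) a = ennreal (x powr a)"
  by (simp add: enn_powr_def)

lemma enn_powr_top[simp]: "enn_powr top a = top"
  by (simp add: enn_powr_def)

lemma enn_powr_eq0: "enn_powr x a \<le> 0 \<Longrightarrow> x = 0"
  by (cases x rule: ennreal_cases) (auto simp: enn_powr_def ennreal_eq_0_iff[symmetric] simp del: ennreal_eq_0_iff)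

lemma nn_sum_cmult:
  fixes J :: "nat \<Rightarrow> 'y \<Rightarrow> ennreal"
  assumes J: "\<And>i. i < l \<Longrightarrow> J i \<in> borel_measurable M" and P: "P \<subseteq> {..<l}"
  shows "(\<integral>\<^sup>+ y. (\<Sum>i\<in>P. a i * J i y) \<partial>M) = (\<Sum>i\<in>P. a i * (\<integral>\<^sup>+ y. J i y \<partial>M))"
proof -
  have fP: "finite P" using P finite_subset by blast
  have "(\<integral>\<^sup>+ y. (\<Sum>i\<in>P. a i * J i y) \<partial>M) = (\<Sum>i\<in>P. (\<integral>\<^sup>+ y. a i * J i y \<partial>M))"
    using J P fP by (intro nn_integral_sum) auto
  also have "\<dots> = (\<Sum>i\<in>P. a i * (\<integral>\<^sup>+ y. J i y \<partial>M))"
    using J P by (intro sum.cong refl nn_integral_cmult) auto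
  finally show ?thesis .
qed

lemma lemM:
  fixes M :: "'y measure" and I :: "'y \<Rightarrow> ennreal" and J :: "nat \<Rightarrow> 'y \<Rightarrow> ennreal"
  assumes q: "1 \<le> q" "q \<le> p"
   and J: "\<And>i. i < l \<Longrightarrow> J i \<in> borel_measurable M"
   and H: "\<And>y. y \<in> space M \<Longrightarrow> enn_powr (I y) (1/p)
      \<le> ennreal C * enn_powr (\<Sum>i<l. enn_powr (enn_powr (J i y) (1/p)) q) (1/q)"
  shows "enn_powr (\<integral>\<^sup>+ y. I y \<partial>M) (1/p)
      \<le> ennreal C * enn_powr (\<Sum>i<l. enn_powr (enn_powr (\<integral>\<^sup>+ y. J i y \<partial>M) (1/p)) q) (1/q)"
proof -
  have p0: "p > 0" using q by auto
  show ?thesis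
  proof (cases "C > 0")
    case False
    then have "ennreal C = 0" by (simp add: ennreal_eq_0_iff)
    then have "I y = 0" if "y \<in> space M" for y using H[OF that] by (auto intro: enn_powr_eq0)
    then have "(\<integral>\<^sup>+ y. I y \<partial>M) = 0" by (simp add: nn_integral_cong)
    then show ?thesis by (simp add: enn_powr_def)
  next
    case Cpos: True
    define K where "K i = (\<integral>\<^sup>+ y. J i y \<partial>M)" for i
    show ?thesis
    proof (cases "\<exists>i<l. K i = \<infinity>")
      case True
      then obtain i where i: "i < l" "K i = \<infinity>" by auto
      have "enn_powr (enn_powr (K i) (1/p)) q \<le> (\<Sum>i<l. enn_powr (enn_powr (K i) (1/p)) q)"
        using i by (intro member_le_sum) auto
      then have "\<infinity> \<le> (\<Sum>i<l. enn_powr (enn_powr (K i) (1/p)) q)" using i by simp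
      then have st: "(\<Sum>i<l. enn_powr (enn_powr (K i) (1/p)) q) = top" by (simp add: top_unique)
      have "ennreal C * enn_powr (\<Sum>i<l. enn_powr (enn_powr (K i) (1/p)) q) (1/q) = top"
        unfolding st enn_powr_top using Cpos by (simp add: ennreal_mult_top)
      then show ?thesis by (simp add: K_def[symmetric])
    next
      case False
      then have Kfin: "K i < \<infinity>" if "i < l" for i using that by (auto simp: less_top)
      define k where "k i = enn2real (K i)" for i
      have Kk: "K i = ennreal (k i)" if "i < l" for i using Kfin[OF that] by (simp add: k_def)
      have k0: "k i \<ge> 0" for i by (simp add: k_def)
      define r where "r = p / q"
      have r1: "r \<ge> 1" using q by (simp add: r_def)
      define P where "P = {i. i < l \<and> k i > 0}"
      have finP: "finite P" by (simp add: P_def)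
      define c where "c i = k i powr (q / p)" for i
      have cpos: "c i > 0" if "i \<in> P" for i using that by (simp add: P_def c_def)
      define Cs where "Cs = (\<Sum>i\<in>P. c i)"
      have Cs0: "Cs \<ge> 0" unfolding Cs_def using cpos by (simp add: sum_nonneg less_imp_le)
      define D where "D = C powr p * Cs powr (r - 1)"
      have D0: "D \<ge> 0" by (simp add: D_def)
      have AE1: "AE y in M. \<forall>i\<in>{..<l}. J i y \<noteq> \<infinity>"
      proof (rule eventually_ball_finite)
        show "\<forall>i\<in>{..<l}. AE y in M. J i y \<noteq> \<infinity>"
        proof
          fix i assume i: "i \<in> {..<l}"
          have "integral\<^sup>N M (J i) \<noteq> \<infinity>" using Kfin[of i] i by (auto simp: K_def)
          then show "AE y in M. J i y \<noteq> \<infinity>" using i nn_integral_PInf_AE[OF J[of i]] by auto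
        qed
      qed auto
      have AE2: "AE y in M. \<forall>i\<in>{..<l}. i \<notin> P \<longrightarrow> J i y = 0"
      proof (rule eventually_ball_finite)
        show "\<forall>i\<in>{..<l}. AE y in M. i \<notin> P \<longrightarrow> J i y = 0"
        proof
          fix i assume i: "i \<in> {..<l}"
          show "AE y in M. i \<notin> P \<longrightarrow> J i y = 0"
          proof (cases "i \<in> P")
            case False
            then have "K i = 0" using Kk[of i] k0[of i] i by (auto simp: P_def)
            then show ?thesis using i by (auto simp: K_def nn_integral_0_iff_AE J)
          qed simp
        qed
      qed auto
      have pt: "I y \<le> (\<Sum>i\<in>P. ennreal (D * c i powr (1 - r)) * J i y)"
        if y: "y \<in> space M" and f: "\<forall>i\<in>{..<l}. J i y \<noteq> \<infinity>" and z: "\<forall>i\<in>{..<l}. i \<notin> P \<longrightarrow> J i y = 0" for y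
      proof -
        define j where "j i = enn2real (J i y)" for i
        have Jj: "J i y = ennreal (j i)" if "i < l" for i using f that by (simp add: j_def less_top)
        have j0: "j i \<ge> 0" for i by (simp add: j_def)
        have jz: "j i = 0" if "i < l" "i \<notin> P" for i using z that by (simp add: j_def)
        define S where "S = (\<Sum>i<l. (j i powr (1/p)) powr q)"
        have S0: "S \<ge> 0" by (simp add: S_def sum_nonneg)
        have "(\<Sum>i<l. enn_powr (enn_powr (J i y) (1/p)) q) = (\<Sum>i<l. ennreal ((j i powr (1/p)) powr q))"
          by (intro sum.cong refl) (simp add: Jj enn_powr_ennreal j0)
        also have "\<dots> = ennreal S" by (simp add: S_def)
        finally have "enn_powr (I y) (1/p) \<le> ennreal C * ennreal (S powr (1/q))"
          using H[OF y] S0 by (simp add: enn_powr_ennreal)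
        also have "\<dots> = ennreal (C * S powr (1/q))" using Cpos by (simp add: ennreal_mult)
        finally have Hy: "enn_powr (I y) (1/p) \<le> ennreal (C * S powr (1/q))" .
        then have "I y \<noteq> \<infinity>" by (auto simp: top_unique)
        then obtain \<iota> where \<iota>: "I y = ennreal \<iota>" "\<iota> \<ge> 0" by (cases "I y" rule: ennreal_cases) auto
        have "\<iota> powr (1/p) \<le> C * S powr (1/q)" using Hy \<iota> Cpos by (simp add: enn_powr_ennreal)
        then have "(\<iota> powr (1/p)) powr p \<le> (C * S powr (1/q)) powr p"
          using p0 by (intro powr_mono2) auto
        also have "(\<iota> powr (1/p)) powr p = \<iota>" using p0 \<iota> by (simp add: powr_powr)
        also have "(C * S powr (1/q)) powr p = C powr p * S powr r"
          using Cpos S0 p0 by (simp add: powr_mult powr_powr r_def)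
        finally have i1: "\<iota> \<le> C powr p * S powr r" .
        have "S = (\<Sum>i\<in>P. j i powr (q / p))"
        proof -
          have "S = (\<Sum>i<l. j i powr (q / p))" unfolding S_def by (simp add: powr_powr)
          also have "\<dots> = (\<Sum>i\<in>P. j i powr (q / p))"
            by (rule sum.mono_neutral_right) (auto simp: P_def jz)
          finally show ?thesis .
        qed
        also have "\<dots> powr r \<le> Cs powr (r - 1) * (\<Sum>i\<in>P. c i powr (1 - r) * (j i powr (q / p)) powr r)"
          unfolding Cs_def by (rule jensen_pow[OF finP cpos _ r1]) auto
        also have "(\<Sum>i\<in>P. c i powr (1 - r) * (j i powr (q / p)) powr r) = (\<Sum>i\<in>P. c i powr (1 - r) * j i)"
          using q j0 by (intro sum.cong refl) (simp add: powr_powr r_def)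
        finally have "\<iota> \<le> C powr p * (Cs powr (r - 1) * (\<Sum>i\<in>P. c i powr (1 - r) * j i))"
          using i1 by (meson order_trans mult_left_mono powr_ge_zero)
        then have "\<iota> \<le> (\<Sum>i\<in>P. D * c i powr (1 - r) * j i)"
          by (simp add: D_def sum_distrib_left mult.assoc)
        then have "I y \<le> ennreal (\<Sum>i\<in>P. D * c i powr (1 - r) * j i)" using \<iota> by simp
        also have "\<dots> = (\<Sum>i\<in>P. ennreal (D * c i powr (1 - r)) * J i y)"
          using D0 j0 by (subst sum_ennreal[symmetric]) (auto intro!: sum.cong simp: ennreal_mult Jj P_def)
        finally show ?thesis .
      qed
      have "(\<integral>\<^sup>+ y. I y \<partial>M) \<le> (\<integral>\<^sup>+ y. (\<Sum>i\<in>P. ennreal (D * c i powr (1 - r)) * J i y) \<partial>M)"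
      proof (rule nn_integral_mono_AE)
        show "AE y in M. I y \<le> (\<Sum>i\<in>P. ennreal (D * c i powr (1 - r)) * J i y)"
          using AE1 AE2 AE_space
        proof eventually_elim
          case (elim y) then show ?case by (intro pt) auto
        qed
      qed
      also have "\<dots> = (\<Sum>i\<in>P. ennreal (D * c i powr (1 - r)) * K i)"
        unfolding K_def by (rule nn_sum_cmult[OF J]) (auto simp: P_def)
      also have "\<dots> = ennreal (\<Sum>i\<in>P. D * c i powr (1 - r) * k i)"
        using D0 k0 by (subst sum_ennreal[symmetric]) (auto intro!: sum.cong simp: ennreal_mult Kk P_def)
      also have "(\<Sum>i\<in>P. D * c i powr (1 - r) * k i) = D * Cs"
        unfolding Cs_def sum_distrib_left
      proof (intro sum.cong refl)
        fix i assume i: "i \<in> P"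
        then have ki: "k i > 0" by (simp add: P_def)
        have "c i powr (1 - r) * k i = k i powr (q / p * (1 - r) + 1)"
          using ki by (simp add: c_def powr_powr powr_add)
        also have "q / p * (1 - r) + 1 = q / p" using q by (simp add: r_def field_simps)
        finally show "D * c i powr (1 - r) * k i = D * c i" by (simp add: c_def mult.assoc)
      qed
      also have "D * Cs = C powr p * Cs powr r"
      proof (cases "Cs = 0")
        case False
        have "Cs powr (r - 1) * Cs powr 1 = Cs powr (r - 1 + 1)" by (rule powr_add[symmetric])
        then have "Cs powr (r - 1) * Cs = Cs powr r" using Cs0 False by simp
        then show ?thesis unfolding D_def by (simp add: mult.assoc)
      qed (use r1 in \<open>simp add: D_def\<close>)
      finally have int: "(\<integral>\<^sup>+ y. I y \<partial>M) \<le> ennreal (C powr p * Cs powr r)" .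
      then obtain t where t: "(\<integral>\<^sup>+ y. I y \<partial>M) = ennreal t" "t \<ge> 0" "t \<le> C powr p * Cs powr r"
        by (cases "(\<integral>\<^sup>+ y. I y \<partial>M)" rule: ennreal_cases) (auto simp: top_unique)
      have "t powr (1/p) \<le> (C powr p * Cs powr r) powr (1/p)"
        using t p0 by (intro powr_mono2) auto
      also have "\<dots> = C * Cs powr (1/q)"
        using Cpos Cs0 p0 q by (simp add: powr_mult powr_powr r_def)
      finally have lhs: "enn_powr (\<integral>\<^sup>+ y. I y \<partial>M) (1/p) \<le> ennreal (C * Cs powr (1/q))"
        using t by (simp add: enn_powr_ennreal ennreal_leI)
      have "(\<Sum>i<l. enn_powr (enn_powr (K i) (1/p)) q) = (\<Sum>i<l. ennreal ((k i powr (1/p)) powr q))"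
        by (intro sum.cong refl) (simp add: Kk enn_powr_ennreal k0)
      also have "\<dots> = ennreal (\<Sum>i<l. k i powr (q / p))" by (simp add: powr_powr)
      also have "(\<Sum>i<l. k i powr (q / p)) = Cs"
        unfolding Cs_def c_def
        by (rule sum.mono_neutral_right) (auto simp: P_def, metis k0 order_le_less)
      finally have "ennreal C * enn_powr (\<Sum>i<l. enn_powr (enn_powr (K i) (1/p)) q) (1/q)
          = ennreal (C * Cs powr (1/q))"
        using Cs0 Cpos by (simp add: enn_powr_ennreal ennreal_mult)
      then show ?thesis using lhs by (simp add: K_def)
    qed
  qed
qed



lemma lebesgue_borel_part:
  assumes "A \<in> sets lebesgue"
  obtains S N where "S \<in> sets borel" "N \<in> null_sets lborel" "\<And>x. x \<notin> N \<Longrightarrow> indicator A x = (indicator S x :: ennreal)"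
proof -
  from sets_completionE[OF assms] obtain S N N' where
    "A = S \<union> N" "N \<subseteq> N'" "N' \<in> null_sets lborel" "S \<in> sets lborel" by blast
  then show ?thesis by (intro that[of S N']) (auto simp: indicator_def)
qed

lemma lemL:
  fixes F :: "'x::euclidean_space \<times> 'y::euclidean_space \<Rightarrow> ennreal"
  assumes F[measurable]: "F \<in> borel_measurable borel" and A: "A \<in> sets lebesgue" and A': "A' \<in> sets lebesgue"
  shows "(\<integral>\<^sup>+ z. F z * indicator (A \<times> A') z \<partial>lebesgue)
       = (\<integral>\<^sup>+ y. (\<integral>\<^sup>+ x. F (x, y) * indicator A x \<partial>lebesgue) * indicator A' y \<partial>lebesgue)"
    and "(\<lambda>y. \<integral>\<^sup>+ x. F (x, y) * indicator A x \<partial>lebesgue) \<in> borel_measurable lebesgue"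
proof -
  obtain S N where S[measurable]: "S \<in> sets borel" and N: "N \<in> null_sets lborel"
    and SN: "\<And>x. x \<notin> N \<Longrightarrow> indicator A x = (indicator S x :: ennreal)"
    using lebesgue_borel_part[OF A] by blast
  obtain T N2 where T[measurable]: "T \<in> sets borel" and N2: "N2 \<in> null_sets lborel"
    and TO: "\<And>x. x \<notin> N2 \<Longrightarrow> indicator A' x = (indicator T x :: ennreal)"
    using lebesgue_borel_part[OF A'] by blast
  define g where "g y = (\<integral>\<^sup>+ x. F (x, y) * indicator S x \<partial>lborel)" for y
  have inner: "(\<integral>\<^sup>+ x. F (x, y) * indicator A x \<partial>lebesgue) = g y" for y
    unfolding g_def nn_integral_completion
    by (rule nn_integral_cong_AE) (use AE_not_in[OF N] SN in auto)
  have swapm: "(\<lambda>z::'y \<times> 'x. (snd z, fst z)) \<in> borel_measurable borel"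
    by (intro borel_measurable_continuous_onI continuous_intros)
  have gm: "g \<in> borel_measurable lborel"
  proof -
    have "(\<lambda>z::'y \<times> 'x. F (snd z, fst z) * indicator S (snd z)) \<in> borel_measurable borel"
    proof -
      have sm: "(\<lambda>z::'y \<times> 'x. snd z) \<in> borel_measurable borel"
        by (intro borel_measurable_continuous_onI continuous_intros)
      have [measurable]: "(\<lambda>z::'y \<times> 'x. F (snd z, fst z)) \<in> borel_measurable borel"
        using measurable_compose[OF swapm F] by (simp add: comp_def)
      have [measurable]: "(\<lambda>z::'y \<times> 'x. indicator S (snd z) :: ennreal) \<in> borel_measurable borel"
        using measurable_compose[OF sm borel_measurable_indicator[OF S]] by (simp add: comp_def)
      show ?thesis by measurable
    qed
    then have "(\<lambda>z::'y \<times> 'x. F (snd z, fst z) * indicator S (snd z)) \<in> borel_measurable (lborel \<Otimes>\<^sub>M lborel)"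
      unfolding lborel_prod by (simp add: measurable_lborel1)
    then show ?thesis unfolding g_def
      by (intro lborel.borel_measurable_nn_integral) (simp add: split_beta')
  qed
  show "(\<lambda>y. \<integral>\<^sup>+ x. F (x, y) * indicator A x \<partial>lebesgue) \<in> borel_measurable lebesgue"
    unfolding inner using gm by (rule measurable_completion)
  have Fm2: "(\<lambda>z. F z * indicator (S \<times> T) z) \<in> borel_measurable (lborel \<Otimes>\<^sub>M lborel)"
  proof -
    have [measurable]: "S \<times> T \<in> sets borel" by (rule borel_Times[OF S T])
    have "(\<lambda>z. F z * indicator (S \<times> T) z) \<in> borel_measurable borel" by measurable
    then show ?thesis unfolding lborel_prod by (simp add: measurable_lborel1)
  qed
  have nul: "N \<times> UNIV \<union> UNIV \<times> N2 \<in> null_sets (lborel \<Otimes>\<^sub>M lborel :: ('x \<times> 'y) measure)"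
    using N N2 by (intro null_sets.Un lborel.times_in_null_sets1 lborel.times_in_null_sets2) auto
  have "(\<integral>\<^sup>+ z. F z * indicator (A \<times> A') z \<partial>lebesgue) = (\<integral>\<^sup>+ z. F z * indicator (S \<times> T) z \<partial>lborel)"
    unfolding nn_integral_completion
  proof (rule nn_integral_cong_AE)
    show "AE z in lborel. F z * indicator (A \<times> A') z = F z * indicator (S \<times> T) z"
      using AE_not_in[OF nul[unfolded lborel_prod]]
    proof eventually_elim
      case (elim z)
      then show ?case using SN[of "fst z"] TO[of "snd z"]
        by (cases z) (auto simp: indicator_times)
    qed
  qed
  also have "\<dots> = (\<integral>\<^sup>+ z. F z * indicator (S \<times> T) z \<partial>(lborel \<Otimes>\<^sub>M lborel))"
    by (simp add: lborel_prod)
  also have "\<dots> = (\<integral>\<^sup>+ y. (\<integral>\<^sup>+ x. F (x, y) * indicator (S \<times> T) (x, y) \<partial>lborel) \<partial>lborel)"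
    by (rule lborel_pair.nn_integral_snd[OF Fm2, symmetric])
  also have "\<dots> = (\<integral>\<^sup>+ y. g y * indicator T y \<partial>lborel)"
    unfolding g_def
    by (intro nn_integral_cong) (simp add: indicator_times nn_integral_multc mult.assoc[symmetric] flip: nn_integral_multc)
  also have "\<dots> = (\<integral>\<^sup>+ y. (\<integral>\<^sup>+ x. F (x, y) * indicator A x \<partial>lebesgue) * indicator A' y \<partial>lebesgue)"
    unfolding inner unfolding nn_integral_completion
    by (rule nn_integral_cong_AE) (use AE_not_in[OF N2] TO in auto)
  finally show "(\<integral>\<^sup>+ z. F z * indicator (A \<times> A') z \<partial>lebesgue)
       = (\<integral>\<^sup>+ y. (\<integral>\<^sup>+ x. F (x, y) * indicator A x \<partial>lebesgue) * indicator A' y \<partial>lebesgue)" .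
qed



lemma sf_lebesgue: "sigma_finite_measure (lebesgue :: 'a::euclidean_space measure)"
proof
  obtain A :: "nat \<Rightarrow> 'a set" where "range A \<subseteq> sets lborel" "(\<Union>i. A i) = space lborel"
    "\<And>i. emeasure lborel (A i) \<noteq> \<infinity>" using lborel.sigma_finite by blast
  then show "\<exists>A. countable A \<and> A \<subseteq> sets (lebesgue :: 'a measure) \<and> \<Union>A = space lebesgue \<and> (\<forall>a\<in>A. emeasure lebesgue a \<noteq> \<infinity>)"
    by (intro exI[of _ "range A"]) auto
qed

interpretation lebesgue_sf: sigma_finite_measure "lebesgue :: 'a::euclidean_space measure"
  by (rule sf_lebesgue)

lemma e_meas[measurable]: "e \<in> borel_measurable borel"
  unfolding e_def by (intro borel_measurable_continuous_onI continuous_intros)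

lemma id_leb_meas[measurable]: "(\<lambda>x::'a::euclidean_space. x) \<in> borel_measurable lebesgue"
  by (rule measurable_completion) simp

lemma E2_meas:
  fixes Q1 :: "'a::euclidean_space \<Rightarrow> 'b::euclidean_space" and Q2 :: "'a \<Rightarrow> 'c::euclidean_space"
  assumes [measurable]: "Q1 \<in> borel_measurable lebesgue" "Q2 \<in> borel_measurable lebesgue"
    "h \<in> borel_measurable lebesgue" "V \<in> sets lebesgue"
  shows "E2 Q1 Q2 V h \<in> borel_measurable borel"
proof -
  let ?N = "((lborel \<Otimes>\<^sub>M lborel) \<Otimes>\<^sub>M lborel) \<Otimes>\<^sub>M (lebesgue :: 'a measure)"
  have [measurable]: "(\<lambda>x. fst (fst (fst x)) \<bullet> snd x) \<in> borel_measurable ?N"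
    by (rule borel_measurable_inner) measurable
  have [measurable]: "(\<lambda>x. snd (fst (fst x)) \<bullet> Q1 (snd x)) \<in> borel_measurable ?N"
    by (rule borel_measurable_inner) measurable
  have [measurable]: "(\<lambda>x. snd (fst x) \<bullet> Q2 (snd x)) \<in> borel_measurable ?N"
    by (rule borel_measurable_inner) measurable
  have "(\<lambda>(z, u). indicator V u *\<^sub>R (h u * e (fst (fst z) \<bullet> u + snd (fst z) \<bullet> Q1 u + snd z \<bullet> Q2 u)))
     \<in> borel_measurable (((lborel \<Otimes>\<^sub>M lborel) \<Otimes>\<^sub>M lborel) \<Otimes>\<^sub>M lebesgue)" by measurable
  then have "(\<lambda>z. \<integral>u. indicator V u *\<^sub>R (h u * e (fst (fst z) \<bullet> u + snd (fst z) \<bullet> Q1 u + snd z \<bullet> Q2 u)) \<partial>lebesgue)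
     \<in> borel_measurable ((lborel \<Otimes>\<^sub>M lborel) \<Otimes>\<^sub>M lborel)"
    by (rule lebesgue_sf.borel_measurable_lebesgue_integral)
  then have "(\<lambda>z. \<integral>u. indicator V u *\<^sub>R (h u * e (fst (fst z) \<bullet> u + snd (fst z) \<bullet> Q1 u + snd z \<bullet> Q2 u)) \<partial>lebesgue)
     \<in> borel_measurable borel" unfolding lborel_prod by (simp add: measurable_lborel1)
  moreover have "E2 Q1 Q2 V h = (\<lambda>z. \<integral>u. indicator V u *\<^sub>R (h u * e (fst (fst z) \<bullet> u + snd (fst z) \<bullet> Q1 u + snd z \<bullet> Q2 u)) \<partial>lebesgue)"
    by (auto simp: E2_def fun_eq_iff set_lebesgue_integral_def)
  ultimately show ?thesis by simp
qed

lemma E2_E1: "E2 Q1 Q2 V h (x, y) = E1 Q1 V (\<lambda>u. h u * e (y \<bullet> Q2 u)) x"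
proof -
  obtain x0 x1 where x: "x = (x0, x1)" by (cases x)
  have eq: "h u * e (x0 \<bullet> u + x1 \<bullet> Q1 u + y \<bullet> Q2 u) = h u * e (y \<bullet> Q2 u) * e (x0 \<bullet> u + x1 \<bullet> Q1 u)" for u
    by (simp add: e_def exp_add[symmetric] algebra_simps)
  show ?thesis by (simp add: x E2_def E1_def eq)
qed



theorem lemma3p1:
  fixes p q C :: real
    and Q1 :: "'a::euclidean_space \<Rightarrow> 'b::euclidean_space"
    and Q2 :: "'a \<Rightarrow> 'c::euclidean_space"
    and U :: "nat \<Rightarrow> 'a set" and l :: nat
    and B :: "('a \<times> 'b) set"
  assumes "1 \<le> q" and "q \<le> p"
    and "Q1 \<in> borel_measurable lebesgue" and "Q2 \<in> borel_measurable lebesgue"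
    and "\<And>i. i < l \<Longrightarrow> U i \<in> sets lebesgue"
    and "\<And>i j. i < l \<Longrightarrow> j < l \<Longrightarrow> i \<noteq> j \<Longrightarrow> U i \<inter> U j = {}"
    and "(\<Union>i<l. U i) = cbox 0 One"
    and "B \<in> sets lebesgue"
    and hyp: "\<And>g :: 'a \<Rightarrow> complex. g \<in> borel_measurable lebesgue \<Longrightarrow>
       Lp_on p B (E1 Q1 (cbox 0 One) g)
         \<le> ennreal C * enn_powr (\<Sum>i<l. enn_powr (Lp_on p B (E1 Q1 (U i) g)) q) (1 / q)"
  shows "\<forall>B' :: 'c set. \<forall>h :: 'a \<Rightarrow> complex.
     B' \<in> sets lebesgue \<longrightarrow> h \<in> borel_measurable lebesgue \<longrightarrow>
       Lp_on p (B \<times> B') (E2 Q1 Q2 (cbox 0 One) h)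
         \<le> ennreal C * enn_powr (\<Sum>i<l. enn_powr (Lp_on p (B \<times> B') (E2 Q1 Q2 (U i) h)) q) (1 / q)"
proof (intro allI impI)
  fix B' :: "'c set" and h :: "'a \<Rightarrow> complex"
  assume B': "B' \<in> sets lebesgue" and hm[measurable]: "h \<in> borel_measurable lebesgue"
  note Qm[measurable] = assms(3,4)
  define g where "g y = (\<lambda>u. h u * e (y \<bullet> Q2 u))" for y
  have gm: "g y \<in> borel_measurable lebesgue" for y
  proof -
    have [measurable]: "(\<lambda>u. y \<bullet> Q2 u) \<in> borel_measurable lebesgue"
      by (rule borel_measurable_inner) measurable
    show ?thesis unfolding g_def by measurable
  qed
  define F where "F V z = ennreal (norm (E2 Q1 Q2 V h z) powr p)" for V z
  have Fm: "F V \<in> borel_measurable borel" if "V \<in> sets lebesgue" for V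
  proof -
    have [measurable]: "E2 Q1 Q2 V h \<in> borel_measurable borel"
      using E2_meas[OF Qm hm that] .
    show ?thesis unfolding F_def by measurable
  qed
  define I where "I V y = (\<integral>\<^sup>+ x. F V (x, y) * indicator B x \<partial>lebesgue)" for V y
  have LpI: "Lp_on p B (E1 Q1 V (g y)) = enn_powr (I V y) (1/p)" for V y
    unfolding Lp_on_def I_def F_def g_def E2_E1 ..
  have Lp2: "Lp_on p (B \<times> B') (E2 Q1 Q2 V h) = enn_powr (\<integral>\<^sup>+ y. I V y * indicator B' y \<partial>lebesgue) (1/p)"
    if "V \<in> sets lebesgue" for V
    unfolding Lp_on_def I_def using lemL(1)[OF Fm[OF that] assms(8) B'] by (simp add: F_def)
  have Im: "(\<lambda>y. I V y * indicator B' y) \<in> borel_measurable lebesgue" if "V \<in> sets lebesgue" for V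
  proof -
    have [measurable]: "I V \<in> borel_measurable lebesgue"
      unfolding I_def using lemL(2)[OF Fm[OF that] assms(8) B'] .
    have [measurable]: "B' \<in> sets lebesgue" by (rule B')
    show ?thesis by measurable
  qed
  have cb: "cbox 0 One \<in> sets lebesgue" by simp
  have "enn_powr (\<integral>\<^sup>+ y. I (cbox 0 One) y * indicator B' y \<partial>lebesgue) (1/p)
     \<le> ennreal C * enn_powr (\<Sum>i<l. enn_powr (enn_powr (\<integral>\<^sup>+ y. I (U i) y * indicator B' y \<partial>lebesgue) (1/p)) q) (1/q)"
  proof (rule lemM[OF assms(1,2)])
    show "(\<lambda>y. I (U i) y * indicator B' y) \<in> borel_measurable lebesgue" if "i < l" for i
      using Im assms(5)[OF that] by blast
    fix y :: 'c
    show "enn_powr (I (cbox 0 One) y * indicator B' y) (1/p)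
      \<le> ennreal C * enn_powr (\<Sum>i<l. enn_powr (enn_powr (I (U i) y * indicator B' y) (1/p)) q) (1/q)"
    proof (cases "y \<in> B'")
      case True
      then show ?thesis using hyp[OF gm[of y]] by (simp add: LpI)
    next
      case False
      then show ?thesis by (simp add: enn_powr_def)
    qed
  qed
  then show "Lp_on p (B \<times> B') (E2 Q1 Q2 (cbox 0 One) h)
         \<le> ennreal C * enn_powr (\<Sum>i<l. enn_powr (Lp_on p (B \<times> B') (E2 Q1 Q2 (U i) h)) q) (1 / q)"
    using assms(5) by (simp add: Lp2[OF cb] Lp2)
qed


end
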